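(* Let $m\geq 1$ and let $g=a_0+a_1z+\cdots+a_mz^m\in\mathbb{Z}[z]$ with $a_0\neq 0$ and $a_m\neq 0$. Suppose that for some index $j\in\{0,\ldots,m-1\}$, exactly $j$ zeros of $g$ (counted with multiplicity) lie in the open disk $\{z\in\mathbb{C}:|z|<1/|a_m|\}$ and the remaining $m-j$ zeros lie outside the closed disk $\{z\in\mathbb{C}:|z|\leq 1\}$. Then $g$ is a product of at most $m-j$ nonconstant irreducible polynomials in $\mathbb{Z}[z]$ (up to a constant factor); i.e., whenever $g=c\,g_1g_2\cdots g_r$ with $c\in\mathbb{Z}$ and each $g_i\in\mathbb{Z}[z]$ nonconstant and irreducible, one has $r\leq m-j$. *)

theory Defs
  imports "HOL-Computational_Algebra.Computational_Algebra" "HOL-Analysis.Analysis"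
begin

definition zeros_in :: "int poly \<Rightarrow> complex set \<Rightarrow> nat" where
  "zeros_in g S = (\<Sum>z\<in>{z. poly (map_poly of_int g) z = 0 \<and> z \<in> S}. order z (map_poly of_int g))"

end

theory Submission
  imports Defs
begin

abbreviation mp :: "int poly \<Rightarrow> complex poly" where "mp \<equiv> map_poly of_int"

lemma mp_mult: "mp (p*q) = mp p * mp q"
  by (intro poly_eqI) (simp add: coeff_map_poly coeff_mult)

lemma mp_prod_list: "mp (prod_list ps) = prod_list (map mp ps)"
  by (induction ps) (simp_all add: mp_mult)

lemma mp_smult: "mp (smult c p) = smult (of_int c) (mp p)"
  by (simp add: map_poly_smult)

lemma mp_degree: "degree (mp p) = degree p"
  by (simp add: degree_map_poly)

lemma mp_coeff: "coeff (mp p) n = of_int (coeff p n)"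
  by (simp add: coeff_map_poly)

lemma mp_eq0: "mp p = 0 \<longleftrightarrow> p = 0"
  by (metis mp_coeff of_int_eq_0_iff poly_eqI coeff_0)

lemma mp_lc: "lead_coeff (mp p) = of_int (lead_coeff p)"
  by (simp add: mp_degree mp_coeff)

lemma zeros_in_size:
  assumes "g \<noteq> 0"
  shows "zeros_in g S = size (filter_mset (\<lambda>z. z \<in> S) (proots (mp g)))"
proof -
  let ?P = "mp g"
  have P0: "?P \<noteq> 0" using assms mp_eq0 by blast
  let ?F = "filter_mset (\<lambda>z. z \<in> S) (proots ?P)"
  have "size ?F = sum (count ?F) (set_mset ?F)"
    by (simp add: size_multiset_overloaded_eq)
  also have "set_mset ?F = {z. poly ?P z = 0 \<and> z \<in> S}"
    using P0 by auto
  also have "sum (count ?F) {z. poly ?P z = 0 \<and> z \<in> S} = sum (\<lambda>z. order z ?P) {z. poly ?P z = 0 \<and> z \<in> S}"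
    using P0 by (intro sum.cong) auto
  finally show ?thesis unfolding zeros_in_def by simp
qed

lemma prod_small:
  fixes M :: "complex multiset"
  assumes "\<forall>x\<in>#M. cmod x < b" "b \<le> 1" "M \<noteq> {#}"
  shows "cmod (poly (\<Prod>x\<in>#M. [:-x,1:]) 0) < b"
  using assms
proof (induction M)
  case empty
  then show ?case by simp
next
  case (add x N)
  show ?case
  proof (cases "N = {#}")
    case True
    then show ?thesis using add.prems by simp
  next
    case False
    have r: "cmod (poly (\<Prod>x\<in>#N. [:-x,1:]) 0) < b" using add False by simp
    have "cmod (poly (\<Prod>x\<in>#add_mset x N. [:-x,1:]) 0) = cmod x * cmod (poly (\<Prod>x\<in>#N. [:-x,1:]) 0)"
      by (simp add: norm_mult)
    also have "\<dots> \<le> 1 * cmod (poly (\<Prod>x\<in>#N. [:-x,1:]) 0)"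
      using add.prems by (intro mult_right_mono) auto
    finally show ?thesis using r by simp
  qed
qed

lemma factor_root:
  fixes h :: "int poly" and A :: int
  assumes "degree h > 0" "coeff h 0 \<noteq> 0" "\<bar>lead_coeff h\<bar> \<le> A" "A \<ge> 1"
    and roots: "\<And>z. poly (mp h) z = 0 \<Longrightarrow> cmod z < 1 / real_of_int A \<or> cmod z > 1"
  shows "\<exists>z. poly (mp h) z = 0 \<and> cmod z > 1"
proof (rule ccontr)
  assume "\<not> ?thesis"
  hence small: "\<And>z. poly (mp h) z = 0 \<Longrightarrow> cmod z < 1 / real_of_int A" using roots by force
  let ?H = "mp h"
  have H0: "?H \<noteq> 0" using assms(1) mp_eq0 by force
  have ne: "proots ?H \<noteq> {#}"
    using size_proots_complex[of ?H] assms(1) mp_degree[of h] by force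
  have allsmall: "\<forall>x\<in>#proots ?H. cmod x < 1 / real_of_int A"
    using small H0 by auto
  have A1: "1 / real_of_int A \<le> 1" using assms(4) by simp
  have pr: "cmod (poly (\<Prod>x\<in>#proots ?H. [:-x,1:]) 0) < 1 / real_of_int A"
    by (rule prod_small[OF allsmall A1 ne])
  have "poly ?H 0 = lead_coeff ?H * poly (\<Prod>x\<in>#proots ?H. [:-x,1:]) 0"
    by (subst (1) complex_poly_decompose_multiset[symmetric]) simp
  hence "cmod (poly ?H 0) = \<bar>real_of_int (lead_coeff h)\<bar> * cmod (poly (\<Prod>x\<in>#proots ?H. [:-x,1:]) 0)"
    by (simp add: mp_lc norm_mult)
  also have "\<dots> \<le> real_of_int A * cmod (poly (\<Prod>x\<in>#proots ?H. [:-x,1:]) 0)"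
    using assms(3) by (intro mult_right_mono) auto
  also have "\<dots> < real_of_int A * (1 / real_of_int A)"
    using pr assms(4) by (intro mult_strict_left_mono) auto
  also have "\<dots> = 1" using assms(4) by simp
  finally have lt: "cmod (poly ?H 0) < 1" .
  have "poly ?H 0 = of_int (coeff h 0)" by (simp add: poly_0_coeff_0 mp_coeff)
  hence "cmod (poly ?H 0) = \<bar>real_of_int (coeff h 0)\<bar>" by (metis norm_of_int)
  moreover have "\<bar>real_of_int (coeff h 0)\<bar> \<ge> 1" using assms(2) by linarith
  ultimately show False using lt by linarith
qed


lemma filter_sum_list_size:
  "size (filter_mset Q (\<Sum>p\<leftarrow>ps. f p)) = (\<Sum>p\<leftarrow>ps. size (filter_mset Q (f p)))"
  by (induction ps) simp_all

lemma length_le_sum_list: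
  fixes f :: "'a \<Rightarrow> nat"
  shows "(\<forall>x\<in>set xs. f x \<ge> 1) \<Longrightarrow> length xs \<le> (\<Sum>x\<leftarrow>xs. f x)"
  by (induction xs) auto

lemma filter_full:
  assumes "size (filter_mset P M) = size M" "x \<in># M"
  shows "P x"
proof (rule ccontr)
  assume "\<not> P x"
  hence "x \<in># filter_mset (\<lambda>x. \<not> P x) M" using assms(2) by simp
  hence "filter_mset (\<lambda>x. \<not> P x) M \<noteq> {#}" by auto
  hence "size (filter_mset (\<lambda>x. \<not> P x) M) \<noteq> 0" by (simp add: size_eq_0_iff_empty)
  moreover have "size M = size (filter_mset P M) + size (filter_mset (\<lambda>x. \<not> P x) M)"
    using arg_cong[OF multiset_partition[of M P], of size] by (simp only: size_union)
  ultimately show False using assms(1) by linarith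
qed

theorem lemma8:
  fixes g :: "int poly" and m j :: nat
  assumes "m \<ge> 1" and "degree g = m"
    and "coeff g 0 \<noteq> 0" and "coeff g m \<noteq> 0"
    and "j < m"
    and "zeros_in g {z. cmod z < 1 / \<bar>real_of_int (coeff g m)\<bar>} = j"
    and "zeros_in g {z. cmod z > 1} = m - j"
  shows "\<forall>(c::int) (gs::int poly list).
           g = smult c (prod_list gs) \<and> (\<forall>h\<in>set gs. degree h > 0 \<and> irreducible h)
           \<longrightarrow> length gs \<le> m - j"
proof (intro allI impI)
  fix c :: int and gs :: "int poly list"
  assume asm: "g = smult c (prod_list gs) \<and> (\<forall>h\<in>set gs. degree h > 0 \<and> irreducible h)"
  hence gdef: "g = smult c (prod_list gs)" and hdeg: "\<And>h. h \<in> set gs \<Longrightarrow> degree h > 0" by auto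
  define A where "A = \<bar>coeff g m\<bar>"
  have A1: "A \<ge> 1" using assms(4) A_def by linarith
  define S1 where "S1 = {z::complex. cmod z < 1 / real_of_int A}"
  define S2 where "S2 = {z::complex. cmod z > 1}"
  have disj: "S1 \<inter> S2 = {}"
  proof -
    have "1 / real_of_int A \<le> 1" using A1 by simp
    thus ?thesis unfolding S1_def S2_def by auto
  qed
  have g0: "g \<noteq> 0" using assms(1,2) by auto
  have c0: "c \<noteq> 0" using g0 gdef by auto
  have gs0: "0 \<notin> set gs" using g0 gdef by (auto simp: prod_list_zero_iff)
  let ?G = "mp g"
  have G0: "?G \<noteq> 0" using g0 mp_eq0 by blast
  have "?G = mp (smult c (prod_list gs))" using gdef by (rule arg_cong)
  also have "\<dots> = smult (of_int c) (mp (prod_list gs))" by (rule mp_smult)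
  also have "\<dots> = smult (of_int c) (prod_list (map mp gs))" by (simp only: mp_prod_list)
  finally have Gdef: "?G = smult (of_int c) (prod_list (map mp gs))" .
  have mgs0: "0 \<notin> set (map mp gs)"
  proof
    assume "0 \<in> set (map mp gs)"
    then obtain h where h: "h \<in> set gs" "0 = mp h" unfolding set_map image_iff by blast
    hence "h = 0" using mp_eq0[of h] by simp
    thus False using h(1) gs0 by simp
  qed
  have "proots ?G = proots (prod_list (map mp gs))"
    unfolding Gdef by (rule proots_smult) (simp add: c0)
  also have "\<dots> = (\<Sum>p\<leftarrow>map mp gs. proots p)" using proots_prod_list[OF mgs0] by simp
  also have "\<dots> = (\<Sum>p\<leftarrow>gs. proots (mp p))" by (simp add: o_def)
  finally have prG: "proots ?G = (\<Sum>p\<leftarrow>gs. proots (mp p))" .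
  have z1: "size (filter_mset (\<lambda>z. z \<in> S1) (proots ?G)) = j"
    using assms(6) zeros_in_size[OF g0] unfolding S1_def A_def by simp
  have z2: "size (filter_mset (\<lambda>z. z \<in> S2) (proots ?G)) = m - j"
    using assms(7) zeros_in_size[OF g0] unfolding S2_def by simp
  have "filter_mset (\<lambda>z. z \<in> S1 \<union> S2) (proots ?G) =
        filter_mset (\<lambda>z. z \<in> S1) (proots ?G) + filter_mset (\<lambda>z. z \<in> S2) (proots ?G)"
    using disj by (intro multiset_eqI) auto
  hence "size (filter_mset (\<lambda>z. z \<in> S1 \<union> S2) (proots ?G)) = size (proots ?G)"
    using z1 z2 assms(2,5) size_proots_complex[of ?G] mp_degree[of g] by simp
  hence allroots: "\<And>z. poly ?G z = 0 \<Longrightarrow> z \<in> S1 \<union> S2"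
    using filter_full[of "\<lambda>z. z \<in> S1 \<union> S2" "proots ?G"] G0 by simp
  have each: "size (filter_mset (\<lambda>z. z \<in> S2) (proots (mp h))) \<ge> 1" if h: "h \<in> set gs" for h
  proof -
    obtain k where k: "prod_list gs = h * k" using prod_list_dvd[OF h] by (auto elim: dvdE)
    have gk: "g = smult c (h * k)" using gdef k by simp
    have hc0: "coeff h 0 \<noteq> 0" using assms(3) gk by (auto simp: coeff_mult_0)
    have "lead_coeff g = c * (lead_coeff h * lead_coeff k)"
      using gk by (simp add: lead_coeff_mult)
    moreover have "lead_coeff g = coeff g m" using assms(2) by simp
    moreover have "lead_coeff k \<noteq> 0" using g0 gk by auto
    moreover have "lead_coeff h \<noteq> 0" using g0 gk by auto
    ultimately have eqA: "A = \<bar>lead_coeff h\<bar> * \<bar>c * lead_coeff k\<bar>" and nz: "c * lead_coeff k \<noteq> 0"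
      unfolding A_def using c0 by (auto simp: abs_mult)
    have ge1: "\<bar>c * lead_coeff k\<bar> \<ge> 1" using nz by linarith
    have lc: "\<bar>lead_coeff h\<bar> \<le> A"
      unfolding eqA using mult_left_mono[OF ge1, of "\<bar>lead_coeff h\<bar>"] by simp
    have Gk: "?G = smult (of_int c) (mp h * mp k)" using gk by (simp add: mp_smult mp_mult)
    have rootsH: "cmod z < 1 / real_of_int A \<or> cmod z > 1" if pz: "poly (mp h) z = 0" for z
    proof -
      have "poly ?G z = 0" unfolding Gk using pz by simp
      hence "z \<in> S1 \<union> S2" by (rule allroots)
      thus ?thesis unfolding S1_def S2_def by blast
    qed
    obtain z where z: "poly (mp h) z = 0" "cmod z > 1"
      using factor_root[OF hdeg[OF h] hc0 lc A1 rootsH] by blast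
    have "mp h \<noteq> 0" using h gs0 mp_eq0 by metis
    hence "z \<in># filter_mset (\<lambda>z. z \<in> S2) (proots (mp h))" using z S2_def by simp
    hence "filter_mset (\<lambda>z. z \<in> S2) (proots (mp h)) \<noteq> {#}" by auto
    hence "size (filter_mset (\<lambda>z. z \<in> S2) (proots (mp h))) \<noteq> 0" by (simp add: size_eq_0_iff_empty)
    thus ?thesis by linarith
  qed
  have "length gs \<le> (\<Sum>h\<leftarrow>gs. size (filter_mset (\<lambda>z. z \<in> S2) (proots (mp h))))"
    using each by (intro length_le_sum_list) auto
  also have "\<dots> = size (filter_mset (\<lambda>z. z \<in> S2) (proots ?G))"
    unfolding prG by (rule filter_sum_list_size[symmetric])
  also have "\<dots> = m - j" by (rule z2)
  finally show "length gs \<le> m - j" .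
qed

end
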